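(* Let $d\in\mathbb{N}$, $\sigma>0$ and $\sigma_0\geq 0$. Let $H_{\sigma,\sigma_0,\mathbb{C}^d}$ denote the space of holomorphic functions $f:\mathbb{C}^d\to\mathbb{C}$ with $\|f\|_{\sigma,\sigma_0,\mathbb{C}^d}<\infty$, equipped with the inner product $$\langle f,g\rangle_{\sigma,\sigma_0,\mathbb{C}^d}=\left(\frac{e\sigma^2}{2\pi}\right)^d\int_{\mathbb{C}^d}f(\boldsymbol{z})\overline{g(\boldsymbol{z})}\,e^{-\sigma^2|\boldsymbol{z}|^2}\,e^{e^{-\sigma_0^2|\boldsymbol{z}|^2}-1}\,dV_{\mathbb{C}^d}(\boldsymbol{z})$$ and the induced norm $\|f\|_{\sigma,\sigma_0,\mathbb{C}^d}=\langle f,f\rangle_{\sigma,\sigma_0,\mathbb{C}^d}^{1/2}$. Then $\left(H_{\sigma,\sigma_0,\mathbb{C}^d},\langle\cdot,\cdot\rangle_{\sigma,\sigma_0,\mathbb{C}^d}\right)$ is a reproducing kernel Hilbert space, i.e. it is a Hilbert space of functions on $\mathbb{C}^d$ on which, for every $\boldsymbol{z}\in\mathbb{C}^d$, the evaluation functional $f\mapsto f(\boldsymbol{z})$ is continuous.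
   Context: $dV_{\mathbb{C}^d}$ is Lebesgue measure on $\mathbb{C}^d\cong\mathbb{R}^{2d}$, and for $\boldsymbol{z}=(z_1,\dots,z_d)\in\mathbb{C}^d$, $|\boldsymbol{z}|^2=\sum_{j=1}^d|z_j|^2$. *)

theory Defs
  imports "HOL-Analysis.Analysis"
begin

text \<open>Points of C^d are vectors of type complex^'n, with d = CARD('n); the norm on
  complex^'n is the Euclidean norm, so norm z ^ 2 = sum of |z_j|^2, and lborel on
  complex^'n is Lebesgue measure on R^(2d).\<close>

definition holomorphic_Cd :: "(complex ^ 'n \<Rightarrow> complex) \<Rightarrow> bool" where
  "holomorphic_Cd f \<longleftrightarrow>
     (\<forall>z. \<exists>L. (f has_derivative L) (at z) \<and> (\<forall>(c::complex) v. L (c *s v) = c * L v))"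

definition weight :: "real \<Rightarrow> real \<Rightarrow> complex ^ 'n \<Rightarrow> real" where
  "weight \<sigma> \<sigma>0 z =
     (exp 1 * \<sigma>\<^sup>2 / (2 * pi)) ^ CARD('n)
     * exp (- (\<sigma>\<^sup>2 * (norm z)\<^sup>2)) * exp (exp (- (\<sigma>0\<^sup>2 * (norm z)\<^sup>2)) - 1)"

definition inner_H :: "real \<Rightarrow> real \<Rightarrow> (complex ^ 'n \<Rightarrow> complex) \<Rightarrow> (complex ^ 'n \<Rightarrow> complex) \<Rightarrow> complex" where
  "inner_H \<sigma> \<sigma>0 f g = (LINT z|lborel. f z * cnj (g z) * complex_of_real (weight \<sigma> \<sigma>0 z))"

definition H_space :: "real \<Rightarrow> real \<Rightarrow> (complex ^ 'n \<Rightarrow> complex) set" where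
  "H_space \<sigma> \<sigma>0 = {f. holomorphic_Cd f \<and>
      integrable lborel (\<lambda>z. (cmod (f z))\<^sup>2 * weight \<sigma> \<sigma>0 z)}"

definition is_RKHS :: "('a \<Rightarrow> complex) set \<Rightarrow> (('a \<Rightarrow> complex) \<Rightarrow> ('a \<Rightarrow> complex) \<Rightarrow> complex) \<Rightarrow> bool" where
  "is_RKHS H ip \<longleftrightarrow>
    (let nrm = (\<lambda>f. sqrt (Re (ip f f))) in
     (\<lambda>x. 0) \<in> H
     \<and> (\<forall>f\<in>H. \<forall>g\<in>H. (\<lambda>x. f x + g x) \<in> H)
     \<and> (\<forall>c. \<forall>f\<in>H. (\<lambda>x. c * f x) \<in> H)
     \<and> (\<forall>f\<in>H. \<forall>g\<in>H. \<forall>h\<in>H. ip (\<lambda>x. f x + g x) h = ip f h + ip g h)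
     \<and> (\<forall>c. \<forall>f\<in>H. \<forall>g\<in>H. ip (\<lambda>x. c * f x) g = c * ip f g)
     \<and> (\<forall>f\<in>H. \<forall>g\<in>H. ip g f = cnj (ip f g))
     \<and> (\<forall>f\<in>H. Im (ip f f) = 0 \<and> Re (ip f f) \<ge> 0)
     \<and> (\<forall>f\<in>H. ip f f = 0 \<longrightarrow> f = (\<lambda>x. 0))
     \<and> (\<forall>F. (\<forall>n. F n \<in> H) \<and>
            (\<forall>e>0. \<exists>N. \<forall>m\<ge>N. \<forall>n\<ge>N. nrm (\<lambda>x. F m x - F n x) < e)
            \<longrightarrow> (\<exists>f\<in>H. (\<lambda>n. nrm (\<lambda>x. F n x - f x)) \<longlonglongrightarrow> 0))
     \<and> (\<forall>x. \<forall>F f. (\<forall>n. F n \<in> H) \<and> f \<in> H \<and> (\<lambda>n. nrm (\<lambda>y. F n y - f y)) \<longlonglongrightarrow> 0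
            \<longrightarrow> (\<lambda>n. F n x) \<longlonglongrightarrow> f x))"

end

theory Submission
  imports Defs "HOL-Complex_Analysis.Complex_Analysis"
begin


lemma circle_mean:
  fixes h :: "complex \<Rightarrow> complex"
  assumes h: "h holomorphic_on UNIV"
  shows "((\<lambda>t. h (cis t)) has_integral (2 * pi * h 0)) {0..2*pi}"
proof -
  have "((\<lambda>u. h u/(u-0)) has_contour_integral (2 * of_real pi * \<i> * h 0)) (circlepath 0 1)"
    by (rule Cauchy_integral_circlepath) (auto intro: holomorphic_on_subset[OF h] holomorphic_on_imp_continuous_on continuous_on_subset[OF holomorphic_on_imp_continuous_on[OF h]])
  then have "((\<lambda>t. h (0 + 1 * cis t)/(0 + 1 * cis t - 0) * 1 * \<i> * cis t) has_integral (2 * of_real pi * \<i> * h 0)) {0..2*pi}"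
    unfolding circlepath_def by (subst (asm) has_contour_integral_part_circlepath_iff) auto
  then have "((\<lambda>t. \<i> * h (cis t)) has_integral (\<i> * (2 * pi * h 0))) {0..2*pi}"
    by (simp add: field_simps)
  then have "((\<lambda>t. (-\<i>) * (\<i> * h (cis t))) has_integral (-\<i>) * (\<i> * (2 * pi * h 0))) {0..2*pi}"
    by (rule has_integral_mult_right)
  then show ?thesis by simp
qed

lemma circle_mean_sq:
  fixes h :: "complex \<Rightarrow> complex"
  assumes h: "h holomorphic_on UNIV"
  shows "2 * pi * (cmod (h 0))\<^sup>2 \<le> integral {0..2*pi} (\<lambda>t. (cmod (h (cis t)))\<^sup>2)"
proof -
  have "(\<lambda>z. h z * h z) holomorphic_on UNIV" using h by (intro holomorphic_intros)
  from circle_mean[OF this] have I: "((\<lambda>t. h (cis t) * h (cis t)) has_integral (2 * pi * (h 0 * h 0))) {0..2*pi}" .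
  have c: "continuous_on UNIV h" using h holomorphic_on_imp_continuous_on by blast
  have cc: "continuous_on {0..2*pi} (\<lambda>t. (cmod (h (cis t)))\<^sup>2)"
    by (intro continuous_intros continuous_on_compose2[OF c]) auto
  have "norm (integral {0..2*pi} (\<lambda>t. h (cis t) * h (cis t))) \<le> integral {0..2*pi} (\<lambda>t. (cmod (h (cis t)))\<^sup>2)"
    by (rule integral_norm_bound_integral) (use I integrable_continuous_interval[OF cc] in \<open>auto simp: norm_mult power2_eq_square\<close>)
  moreover have "integral {0..2*pi} (\<lambda>t. h (cis t) * h (cis t)) = 2 * pi * (h 0 * h 0)"
    using I by (rule integral_unique)
  ultimately show ?thesis by (simp add: norm_mult power2_eq_square)
qed



lemma prod_Basis_vec:
  "(\<Prod>b\<in>(Basis :: ('a::euclidean_space^'n) set). g b) = (\<Prod>i\<in>UNIV. \<Prod>u\<in>Basis. g (axis i u))"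
proof -
  have "(\<Prod>b\<in>(Basis :: ('a::euclidean_space^'n) set). g b) = (\<Prod>i\<in>UNIV. \<Prod>b\<in>(\<Union>u\<in>Basis. {axis i u}). g b)"
    unfolding Basis_vec_def
    by (rule prod.UNION_disjoint) (auto simp: axis_eq_axis)
  also have "\<dots> = (\<Prod>i\<in>UNIV. \<Prod>u\<in>Basis. g (axis i u))"
  proof (rule prod.cong[OF refl])
    fix i :: 'n
    have "(\<Union>u\<in>(Basis::'a set). {axis i u}) = axis i ` Basis" by auto
    moreover have "inj_on (axis i :: 'a \<Rightarrow> 'a^'n) Basis" by (auto simp: inj_on_def axis_eq_axis)
    ultimately show "(\<Prod>b\<in>(\<Union>u\<in>Basis. {axis i u}). g b) = (\<Prod>u\<in>Basis. g (axis i u))"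
      by (simp add: prod.reindex)
  qed
  finally show ?thesis .
qed

definition cpl :: "(real^'n) \<times> (real^'n) \<Rightarrow> complex^'n" where
  "cpl p = (\<chi> i. Complex (fst p $ i) (snd p $ i))"

definition vre :: "complex^'n \<Rightarrow> real^'n" where "vre v = (\<chi> i. Re (v $ i))"
definition vim :: "complex^'n \<Rightarrow> real^'n" where "vim v = (\<chi> i. Im (v $ i))"

lemma cpl_linear: "linear cpl"
  by (rule linearI) (auto simp: cpl_def vec_eq_iff complex_eq_iff)

lemma cpl_cont: "continuous_on UNIV cpl"
  using cpl_linear linear_continuous_on linear_conv_bounded_linear by blast

lemma cpl_meas[measurable]: "cpl \<in> borel_measurable borel"
  using cpl_cont by (rule borel_measurable_continuous_onI)

lemma cpl_vre_vim: "cpl (vre v, vim v) = v"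
  by (simp add: cpl_def vre_def vim_def vec_eq_iff complex_eq_iff)

lemma vre_cpl: "vre (cpl p) = fst p" and vim_cpl: "vim (cpl p) = snd p"
  by (simp_all add: cpl_def vre_def vim_def vec_eq_iff)

lemma mem_box_cvec:
  fixes x :: "complex^'n"
  shows "x \<in> box l u \<longleftrightarrow> (\<forall>i. Re (l$i) < Re (x$i) \<and> Re (x$i) < Re (u$i) \<and> Im (l$i) < Im (x$i) \<and> Im (x$i) < Im (u$i))"
  by (auto simp: mem_box Basis_vec_def inner_axis Basis_complex_def inner_complex_def)

lemma cpl_preimage_box:
  "cpl -` box l u = box (vre l) (vre u) \<times> box (vim l) (vim u)"
  by (auto simp: mem_box_cvec interval_cart cpl_def vre_def vim_def)

lemma prod_Basis_cvec:
  fixes x :: "complex^'n"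
  shows "(\<Prod>b\<in>Basis. x \<bullet> b) = (\<Prod>i\<in>UNIV. Re (x$i)) * (\<Prod>i\<in>UNIV. Im (x$i))"
  by (simp add: prod_Basis_vec inner_axis Basis_complex_def inner_complex_def prod.distrib)

lemma prod_Basis_rvec:
  fixes x :: "real^'n"
  shows "(\<Prod>b\<in>Basis. x \<bullet> b) = (\<Prod>i\<in>UNIV. x$i)"
  by (simp add: prod_Basis_vec inner_axis)

lemma cpl_lborel: "distr lborel borel cpl = (lborel :: (complex^'n) measure)"
proof (rule lborel_eqI[symmetric])
  fix l u :: "complex^'n"
  assume le: "\<And>b. b \<in> Basis \<Longrightarrow> l \<bullet> b \<le> u \<bullet> b"
  have le1: "Re (l$i) \<le> Re (u$i)" "Im (l$i) \<le> Im (u$i)" for i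
    using le[of "axis i 1"] le[of "axis i \<i>"] by (auto simp: inner_axis inner_complex_def)
  have "emeasure (distr lborel borel cpl) (box l u) = emeasure lborel (cpl -` box l u)"
    by (subst emeasure_distr) auto
  also have "\<dots> = emeasure (lborel \<Otimes>\<^sub>M lborel) (box (vre l) (vre u) \<times> box (vim l) (vim u))"
    by (simp add: cpl_preimage_box lborel_prod)
  also have "\<dots> = emeasure lborel (box (vre l) (vre u)) * emeasure lborel (box (vim l) (vim u))"
    by (simp add: lborel.emeasure_pair_measure_Times)
  also have "\<dots> = ennreal (\<Prod>i\<in>UNIV. Re (u$i) - Re (l$i)) * ennreal (\<Prod>i\<in>UNIV. Im (u$i) - Im (l$i))"
  proof -
    have "\<forall>b\<in>Basis. vre l \<bullet> b \<le> vre u \<bullet> b" "\<forall>b\<in>Basis. vim l \<bullet> b \<le> vim u \<bullet> b"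
      using le1 by (auto simp: vre_def vim_def Basis_vec_def inner_axis)
    then show ?thesis by (simp add: emeasure_lborel_box_eq prod_Basis_rvec vre_def vim_def)
  qed
  also have "\<dots> = ennreal (\<Prod>b\<in>Basis. (u - l) \<bullet> b)"
    using le1 by (simp add: prod_Basis_cvec ennreal_mult[symmetric] prod_nonneg)
  finally show "emeasure (distr lborel borel cpl) (box l u) = ennreal (\<Prod>b\<in>Basis. (u - l) \<bullet> b)" .
qed simp



lemma nn_integral_translate:
  fixes c :: "'a::euclidean_space"
  assumes [measurable]: "g \<in> borel_measurable borel"
  shows "(\<integral>\<^sup>+x. g (c + x) \<partial>lborel) = (\<integral>\<^sup>+x. g x \<partial>lborel)"
proof -
  have "(\<integral>\<^sup>+x. g x \<partial>lborel) = (\<integral>\<^sup>+x. g x \<partial>(distr lborel borel ((+) c)))"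
    by (simp add: lborel_distr_plus)
  also have "\<dots> = (\<integral>\<^sup>+x. g (c + x) \<partial>lborel)"
    by (subst nn_integral_distr) auto
  finally show ?thesis ..
qed

definition rot :: "real \<Rightarrow> real \<Rightarrow> (real^'n) \<times> (real^'n) \<Rightarrow> (real^'n) \<times> (real^'n)" where
  "rot c s p = (c *\<^sub>R fst p - s *\<^sub>R snd p, s *\<^sub>R fst p + c *\<^sub>R snd p)"

definition shx :: "real \<Rightarrow> (real^'n) \<times> (real^'n) \<Rightarrow> (real^'n) \<times> (real^'n)" where
  "shx a p = (fst p + a *\<^sub>R snd p, snd p)"
definition shy :: "real \<Rightarrow> (real^'n) \<times> (real^'n) \<Rightarrow> (real^'n) \<times> (real^'n)" where
  "shy a p = (fst p, snd p + a *\<^sub>R fst p)"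

lemma shx_meas[measurable]: "shx a \<in> borel_measurable borel"
  unfolding shx_def by (intro borel_measurable_continuous_onI continuous_intros)
lemma shy_meas[measurable]: "shy a \<in> borel_measurable borel"
  unfolding shy_def by (intro borel_measurable_continuous_onI continuous_intros)
lemma rot_meas[measurable]: "rot c s \<in> borel_measurable borel"
  unfolding rot_def by (intro borel_measurable_continuous_onI continuous_intros)

lemma meas_prod: "f \<in> borel_measurable borel \<Longrightarrow> f \<in> borel_measurable (lborel \<Otimes>\<^sub>M lborel)"
  by (simp add: lborel_prod)

lemma shx_lborel: "distr lborel borel (shx a) = (lborel :: ((real^'n) \<times> (real^'n)) measure)"
proof (rule measure_eqI)
  fix A :: "((real^'n) \<times> (real^'n)) set"
  assume "A \<in> sets (distr lborel borel (shx a))"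
  then have A[measurable]: "A \<in> sets borel" by simp
  have "emeasure (distr lborel borel (shx a)) A = (\<integral>\<^sup>+p. indicator A p \<partial>(distr lborel borel (shx a)))"
    by (simp add: nn_integral_indicator)
  also have "\<dots> = (\<integral>\<^sup>+p. indicator A (shx a p) \<partial>(lborel \<Otimes>\<^sub>M lborel))"
    by (subst nn_integral_distr) (auto simp: lborel_prod)
  also have "\<dots> = (\<integral>\<^sup>+y. \<integral>\<^sup>+x. indicator A (x + a *\<^sub>R y, y) \<partial>lborel \<partial>lborel)"
  proof -
    have m: "(\<lambda>p. indicator A (shx a p) :: ennreal) \<in> borel_measurable (lborel \<Otimes>\<^sub>M lborel)"
      by (rule meas_prod) measurable
    show ?thesis using lborel_pair.nn_integral_snd[OF m] by (simp add: shx_def)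
  qed
  also have "\<dots> = (\<integral>\<^sup>+y. \<integral>\<^sup>+x. indicator A (x, y) \<partial>lborel \<partial>lborel)"
  proof (rule nn_integral_cong)
    fix y :: "real^'n"
    show "(\<integral>\<^sup>+x. indicator A (x + a *\<^sub>R y, y) \<partial>lborel) = (\<integral>\<^sup>+x. indicator A (x, y) \<partial>lborel)"
      using nn_integral_translate[of "\<lambda>x. indicator A (x, y)" "a *\<^sub>R y"]
      by (simp add: add.commute)
  qed
  also have "\<dots> = (\<integral>\<^sup>+p. indicator A p \<partial>(lborel \<Otimes>\<^sub>M lborel))"
  proof -
    have m: "(indicator A :: _ \<Rightarrow> ennreal) \<in> borel_measurable (lborel \<Otimes>\<^sub>M lborel)"
      by (rule meas_prod) measurable
    show ?thesis using lborel_pair.nn_integral_snd[OF m] by simp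
  qed
  also have "\<dots> = emeasure lborel A"
    by (simp add: lborel_prod nn_integral_indicator)
  finally show "emeasure (distr lborel borel (shx a)) A = emeasure lborel A" .
qed simp

lemma shy_lborel: "distr lborel borel (shy a) = (lborel :: ((real^'n) \<times> (real^'n)) measure)"
proof (rule measure_eqI)
  fix A :: "((real^'n) \<times> (real^'n)) set"
  assume "A \<in> sets (distr lborel borel (shy a))"
  then have A[measurable]: "A \<in> sets borel" by simp
  have "emeasure (distr lborel borel (shy a)) A = (\<integral>\<^sup>+p. indicator A p \<partial>(distr lborel borel (shy a)))"
    by (simp add: nn_integral_indicator)
  also have "\<dots> = (\<integral>\<^sup>+p. indicator A (shy a p) \<partial>(lborel \<Otimes>\<^sub>M lborel))"
    by (subst nn_integral_distr) (auto simp: lborel_prod)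
  also have "\<dots> = (\<integral>\<^sup>+x. \<integral>\<^sup>+y. indicator A (x, y + a *\<^sub>R x) \<partial>lborel \<partial>lborel)"
  proof -
    have m: "(\<lambda>p. indicator A (shy a p) :: ennreal) \<in> borel_measurable (lborel \<Otimes>\<^sub>M lborel)"
      by (rule meas_prod) measurable
    show ?thesis using lborel.nn_integral_fst[OF m] by (simp add: shy_def)
  qed
  also have "\<dots> = (\<integral>\<^sup>+x. \<integral>\<^sup>+y. indicator A (x, y) \<partial>lborel \<partial>lborel)"
  proof (rule nn_integral_cong)
    fix x :: "real^'n"
    show "(\<integral>\<^sup>+y. indicator A (x, y + a *\<^sub>R x) \<partial>lborel) = (\<integral>\<^sup>+y. indicator A (x, y) \<partial>lborel)"
      using nn_integral_translate[of "\<lambda>y. indicator A (x, y)" "a *\<^sub>R x"]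
      by (simp add: add.commute)
  qed
  also have "\<dots> = (\<integral>\<^sup>+p. indicator A p \<partial>(lborel \<Otimes>\<^sub>M lborel))"
  proof -
    have m: "(indicator A :: _ \<Rightarrow> ennreal) \<in> borel_measurable (lborel \<Otimes>\<^sub>M lborel)"
      by (rule meas_prod) measurable
    show ?thesis using lborel.nn_integral_fst[OF m] by simp
  qed
  also have "\<dots> = emeasure lborel A"
    by (simp add: lborel_prod nn_integral_indicator)
  finally show "emeasure (distr lborel borel (shy a)) A = emeasure lborel A" .
qed simp

lemma rot_shear:
  assumes "c\<^sup>2 + s\<^sup>2 = 1" "s \<noteq> 0"
  shows "rot c s = shx ((c - 1) / s) \<circ> shy s \<circ> shx ((c - 1) / s)"
proof -
  define a where "a = (c - 1) / s"
  have e1: "1 + a * s = c" using assms by (simp add: a_def field_simps)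
  have e2: "2 * a + a * a * s = - s"
  proof -
    have "(2 * a + a * a * s) * s = 2 * (c - 1) + (c - 1) * (c - 1)"
      using assms(2) by (simp add: a_def field_simps power2_eq_square)
    also have "\<dots> = (- s) * s" using assms(1) by (simp add: algebra_simps power2_eq_square)
    finally show ?thesis using assms(2) mult_right_cancel by blast
  qed
  show ?thesis
  proof
    fix p :: "(real^'n) \<times> (real^'n)"
    obtain x y where p: "p = (x, y)" by (cases p)
    have "fst (shx a (shy s (shx a (x,y)))) = (1 + a * s) *\<^sub>R x + (2 * a + a * a * s) *\<^sub>R y"
      by (simp add: shx_def shy_def vec_eq_iff algebra_simps)
    moreover have "snd (shx a (shy s (shx a (x,y)))) = s *\<^sub>R x + (1 + a * s) *\<^sub>R y"
      by (simp add: shx_def shy_def vec_eq_iff algebra_simps)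
    ultimately show "rot c s p = (shx ((c - 1) / s) \<circ> shy s \<circ> shx ((c - 1) / s)) p"
      unfolding p a_def[symmetric] using e1 e2 by (simp add: rot_def prod_eq_iff)
  qed
qed

lemma rot_lborel:
  assumes "c\<^sup>2 + s\<^sup>2 = 1" "s \<noteq> 0"
  shows "distr lborel borel (rot c s) = (lborel :: ((real^'n) \<times> (real^'n)) measure)"
proof -
  define a where "a = (c - 1) / s"
  have "distr lborel borel (rot c s) = distr (distr (distr lborel borel (shx a)) borel (shy s)) borel (shx a)"
    by (simp add: distr_distr rot_shear[OF assms] a_def comp_assoc)
  also have "\<dots> = lborel" by (simp add: shx_lborel shy_lborel)
  finally show ?thesis .
qed

lemma cmult_linear: "linear (\<lambda>v::complex^'n. w *s v)"
  by (rule linearI) (auto simp: vec_eq_iff algebra_simps scaleR_conv_of_real)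

lemma cmult_meas[measurable]: "(\<lambda>v::complex^'n. w *s v) \<in> borel_measurable borel"
  using cmult_linear linear_continuous_on linear_conv_bounded_linear borel_measurable_continuous_onI by blast

lemma cmult_cpl: "w *s cpl p = cpl (rot (Re w) (Im w) p)"
  by (simp add: cpl_def rot_def vec_eq_iff complex_eq_iff)

lemma nn_integral_rotate:
  fixes g :: "complex^'n \<Rightarrow> ennreal"
  assumes g[measurable]: "g \<in> borel_measurable borel" and w: "cmod w = 1" "Im w \<noteq> 0"
  shows "(\<integral>\<^sup>+v. g (w *s v) \<partial>lborel) = (\<integral>\<^sup>+v. g v \<partial>lborel)"
proof -
  have w2: "(Re w)\<^sup>2 + (Im w)\<^sup>2 = 1" using w(1) by (simp add: cmod_def)
  have "(\<integral>\<^sup>+v. g (w *s v) \<partial>lborel) = (\<integral>\<^sup>+v. g (w *s v) \<partial>(distr lborel borel cpl))"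
    by (simp add: cpl_lborel)
  also have "\<dots> = (\<integral>\<^sup>+p. g (cpl (rot (Re w) (Im w) p)) \<partial>lborel)"
    by (subst nn_integral_distr) (auto simp: cmult_cpl)
  also have "\<dots> = (\<integral>\<^sup>+p. g (cpl p) \<partial>(distr lborel borel (rot (Re w) (Im w))))"
    by (subst nn_integral_distr) (auto simp: rot_def)
  also have "\<dots> = (\<integral>\<^sup>+p. g (cpl p) \<partial>lborel)"
    by (simp add: rot_lborel[OF w2 w(2)])
  also have "\<dots> = (\<integral>\<^sup>+v. g v \<partial>(distr lborel borel cpl))"
    by (subst nn_integral_distr) auto
  also have "\<dots> = (\<integral>\<^sup>+v. g v \<partial>lborel)"
    by (simp add: cpl_lborel)
  finally show ?thesis .
qed



lemma norm_smult_cvec: "norm (w *s (v::complex^'n)) = cmod w * norm v"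
  unfolding norm_vec_def by (simp add: L2_set_right_distrib norm_mult)

lemma smult_bounded_linear: "bounded_linear (\<lambda>h::complex. h *s (v::complex^'n))"
proof -
  have "linear (\<lambda>h::complex. h *s (v::complex^'n))"
    by (rule linearI) (auto simp: vec_eq_iff algebra_simps mult_scaleR_left)
  then show ?thesis using linear_conv_bounded_linear by blast
qed

lemma holo_cont:
  assumes "holomorphic_Cd f"
  shows "continuous_on UNIV f"
proof -
  have "isCont f x" for x
  proof -
    obtain L where "(f has_derivative L) (at x)" using assms unfolding holomorphic_Cd_def by blast
    then show ?thesis by (rule has_derivative_continuous)
  qed
  then show ?thesis by (simp add: continuous_at_imp_continuous_on)
qed

lemma holo_meas[measurable]: "holomorphic_Cd f \<Longrightarrow> f \<in> borel_measurable borel"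
  using holo_cont borel_measurable_continuous_onI by blast

lemma holo_line:
  assumes f: "holomorphic_Cd f"
  shows "(\<lambda>t. f (z + t *s v)) holomorphic_on UNIV"
proof -
  have "(\<lambda>t. f (z + t *s v)) field_differentiable (at t)" for t
  proof -
    obtain L where L: "(f has_derivative L) (at (z + t *s v))" "\<And>(c::complex) u. L (c *s u) = c * L u"
      using f unfolding holomorphic_Cd_def by blast
    have d: "((\<lambda>t. z + t *s v) has_derivative (\<lambda>h. h *s v)) (at t)"
      using smult_bounded_linear[of v]
      by (intro derivative_eq_intros) (auto simp: bounded_linear_imp_has_derivative)
    have "((\<lambda>t. f (z + t *s v)) has_derivative (\<lambda>h. L (h *s v))) (at t)"
      using has_derivative_compose[OF d L(1)] by (simp add: o_def)
    then have "((\<lambda>t. f (z + t *s v)) has_derivative (\<lambda>h. h * L v)) (at t)"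
      by (simp add: L(2))
    then have "((\<lambda>t. f (z + t *s v)) has_field_derivative (L v)) (at t)"
    proof -
      have "(\<lambda>h. h * L v) = (*) (L v)" by (auto simp: fun_eq_iff mult.commute)
      then show ?thesis using \<open>((\<lambda>t. f (z + t *s v)) has_derivative (\<lambda>h. h * L v)) (at t)\<close>
        by (simp add: has_field_derivative_def)
    qed
    then show ?thesis using field_differentiable_def by blast
  qed
  then show ?thesis by (simp add: holomorphic_on_def field_differentiable_at_within)
qed

lemma circle_ineq:
  assumes f: "holomorphic_Cd f"
  shows "ennreal (2 * pi * (cmod (f z))\<^sup>2) \<le> (\<integral>\<^sup>+t. ennreal ((cmod (f (z + cis t *s v)))\<^sup>2) * indicator {0..2*pi} t \<partial>lborel)"
proof -
  have h: "(\<lambda>t. f (z + t *s v)) holomorphic_on UNIV" by (rule holo_line[OF f])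
  have c: "continuous_on UNIV (\<lambda>t. f (z + t *s v))" using h holomorphic_on_imp_continuous_on by blast
  have cc: "continuous_on {0..2*pi} (\<lambda>t. (cmod (f (z + cis t *s v)))\<^sup>2)"
    by (intro continuous_intros continuous_on_compose2[OF c]) auto
  have I: "((\<lambda>t. (cmod (f (z + cis t *s v)))\<^sup>2) has_integral integral {0..2*pi} (\<lambda>t. (cmod (f (z + cis t *s v)))\<^sup>2)) {0..2*pi}"
    using integrable_continuous_interval[OF cc] by (simp add: has_integral_integral)
  have "2 * pi * (cmod (f z))\<^sup>2 \<le> integral {0..2*pi} (\<lambda>t. (cmod (f (z + cis t *s v)))\<^sup>2)"
    using circle_mean_sq[OF h] by simp
  moreover have "(\<integral>\<^sup>+t. ennreal ((cmod (f (z + cis t *s v)))\<^sup>2) * indicator {0..2*pi} t \<partial>lborel) = ennreal (integral {0..2*pi} (\<lambda>t. (cmod (f (z + cis t *s v)))\<^sup>2))"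
    by (rule nn_integral_has_integral_lebesgue'[OF _ I]) simp
  ultimately show ?thesis by (simp add: ennreal_leI)
qed



lemma cont_rotmap: "continuous_on UNIV (\<lambda>p::(complex^'n) \<times> real. z + cis (snd p) *s fst p)"
proof -
  have eq: "(\<lambda>p::(complex^'n) \<times> real. z + cis (snd p) *s fst p) = (\<lambda>p. \<chi> i. z $ i + cis (snd p) * (fst p $ i))"
    by (simp add: fun_eq_iff vec_eq_iff)
  show ?thesis unfolding eq by (intro continuous_intros)
qed

lemma cont_rotmap2: "continuous_on UNIV (\<lambda>t::real. z + cis t *s (v::complex^'n))"
proof -
  have eq: "(\<lambda>t::real. z + cis t *s v) = (\<lambda>t. \<chi> i. z $ i + cis t * (v $ i))"
    by (simp add: fun_eq_iff vec_eq_iff)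
  show ?thesis unfolding eq by (intro continuous_intros)
qed

lemma ball_mean:
  fixes f :: "complex^'n \<Rightarrow> complex" and z :: "complex^'n"
  assumes f: "holomorphic_Cd f"
  shows "ennreal ((cmod (f z))\<^sup>2) * emeasure lborel (ball (0::complex^'n) 1)
     \<le> (\<integral>\<^sup>+v. indicator (ball 0 1) v * ennreal ((cmod (f (z + v)))\<^sup>2) \<partial>lborel)"
proof -
  define B where "B = ball (0::complex^'n) 1"
  define G where "G v = indicator B v * ennreal ((cmod (f (z + v)))\<^sup>2)" for v
  define F where "F v t = ennreal ((cmod (f (z + cis t *s v)))\<^sup>2) * indicator {0..2*pi} t" for v and t :: real
  have Bm[measurable]: "B \<in> sets borel" by (simp add: B_def)
  have fc: "continuous_on UNIV f" by (rule holo_cont[OF f])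
  have m1: "(\<lambda>p::(complex^'n) \<times> real. (cmod (f (z + cis (snd p) *s fst p)))\<^sup>2) \<in> borel_measurable borel"
    by (intro borel_measurable_continuous_onI continuous_intros continuous_on_compose2[OF fc] cont_rotmap) auto
  have s1: "B \<times> UNIV \<in> sets (borel :: ((complex^'n) \<times> real) measure)"
    by (simp add: B_def open_Times)
  have s2: "UNIV \<times> {0..2*pi} \<in> sets (borel :: ((complex^'n) \<times> real) measure)"
    by (intro borel_closed closed_Times) auto
  have mF: "case_prod (\<lambda>v t. indicator B v * F v t) \<in> borel_measurable (lborel \<Otimes>\<^sub>M lborel)"
  proof -
    have "case_prod (\<lambda>v t. indicator B v * F v t) = (\<lambda>p. indicator (B \<times> UNIV) p * (ennreal ((cmod (f (z + cis (snd p) *s fst p)))\<^sup>2) * indicator (UNIV \<times> {0..2*pi}) p))"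
      by (auto simp: fun_eq_iff F_def indicator_def)
    also have "\<dots> \<in> borel_measurable borel"
      using m1 s1 s2 by measurable
    finally show ?thesis by (simp add: lborel_prod)
  qed
  have mG[measurable]: "G \<in> borel_measurable borel"
  proof -
    have "(\<lambda>v. (cmod (f (z + v)))\<^sup>2) \<in> borel_measurable borel"
      by (intro borel_measurable_continuous_onI continuous_intros continuous_on_compose2[OF fc]) auto
    then show ?thesis unfolding G_def by measurable
  qed
  have "ennreal (2*pi) * (ennreal ((cmod (f z))\<^sup>2) * emeasure lborel B)
      = (\<integral>\<^sup>+v. ennreal (2 * pi * (cmod (f z))\<^sup>2) * indicator B v \<partial>lborel)"
  proof -
    have "(\<integral>\<^sup>+v. ennreal (2 * pi * (cmod (f z))\<^sup>2) * indicator B v \<partial>lborel) = ennreal (2 * pi * (cmod (f z))\<^sup>2) * emeasure lborel B"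
      by (rule nn_integral_cmult_indicator) simp
    moreover have "ennreal (2 * pi * (cmod (f z))\<^sup>2) = ennreal (2*pi) * ennreal ((cmod (f z))\<^sup>2)"
      by (rule ennreal_mult) auto
    ultimately show ?thesis by (simp add: mult.assoc)
  qed
  also have "\<dots> \<le> (\<integral>\<^sup>+v. (\<integral>\<^sup>+t. F v t \<partial>lborel) * indicator B v \<partial>lborel)"
    by (intro nn_integral_mono mult_right_mono) (auto simp: F_def circle_ineq[OF f])
  also have "\<dots> = (\<integral>\<^sup>+v. (\<integral>\<^sup>+t. indicator B v * F v t \<partial>lborel) \<partial>lborel)"
  proof (rule nn_integral_cong)
    fix v :: "complex^'n"
    have "(\<lambda>t. (cmod (f (z + cis t *s v)))\<^sup>2) \<in> borel_measurable borel"
      by (intro borel_measurable_continuous_onI continuous_intros continuous_on_compose2[OF fc] cont_rotmap2) auto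
    then have "F v \<in> borel_measurable lborel" unfolding F_def by measurable
    then show "(\<integral>\<^sup>+t. F v t \<partial>lborel) * indicator B v = (\<integral>\<^sup>+t. indicator B v * F v t \<partial>lborel)"
      by (subst nn_integral_cmult) (auto simp: mult.commute)
  qed
  also have "\<dots> = (\<integral>\<^sup>+t. (\<integral>\<^sup>+v. indicator B v * F v t \<partial>lborel) \<partial>lborel)"
    by (rule lborel_pair.Fubini'[OF mF, symmetric])
  also have "\<dots> = (\<integral>\<^sup>+t. indicator {0..2*pi} t * (\<integral>\<^sup>+v. G v \<partial>lborel) \<partial>lborel)"
  proof (rule nn_integral_cong_AE)
    have "AE t in lborel. t \<noteq> 0 \<and> t \<noteq> pi \<and> t \<noteq> 2 * pi"
      using AE_lborel_singleton[of 0] AE_lborel_singleton[of pi] AE_lborel_singleton[of "2*pi"]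
      by eventually_elim auto
    then show "AE t in lborel. (\<integral>\<^sup>+v. indicator B v * F v t \<partial>lborel) = indicator {0..2*pi} t * (\<integral>\<^sup>+v. G v \<partial>lborel)"
    proof eventually_elim
      case (elim t)
      show ?case
      proof (cases "t \<in> {0..2*pi}")
        case False then show ?thesis by (simp add: F_def)
      next
        case True
        then have t: "0 < t" "t < pi \<or> pi < t" "t < 2 * pi" using elim by auto
        have sn: "sin t \<noteq> 0"
        proof
          assume "sin t = 0"
          then obtain n :: int where "t = of_int n * pi" by (auto simp: sin_zero_iff_int2)
          with t have "0 < of_int n * pi" "of_int n * pi < 2 * pi" "of_int n \<noteq> (1::real)" by auto
          then have "0 < n" "n < 2" "n \<noteq> 1" by (auto simp: mult_less_cancel_right pi_gt_zero zero_less_mult_iff)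
          then show False by simp
        qed
        have "(\<integral>\<^sup>+v. indicator B v * F v t \<partial>lborel) = (\<integral>\<^sup>+v. G (cis t *s v) \<partial>lborel)"
          using True by (intro nn_integral_cong) (simp add: F_def G_def B_def norm_smult_cvec indicator_def mem_ball_0)
        also have "\<dots> = (\<integral>\<^sup>+v. G v \<partial>lborel)"
          by (rule nn_integral_rotate) (auto simp: sn)
        finally show ?thesis using True by simp
      qed
    qed
  qed
  also have "\<dots> = ennreal (2*pi) * (\<integral>\<^sup>+v. G v \<partial>lborel)"
  proof -
    have "(\<integral>\<^sup>+t. (\<integral>\<^sup>+v. G v \<partial>lborel) * indicator {0..2*pi} t \<partial>lborel) = (\<integral>\<^sup>+v. G v \<partial>lborel) * emeasure lborel {0..2*pi}"
      by (rule nn_integral_cmult_indicator) simp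
    then show ?thesis by (simp add: mult.commute)
  qed
  finally have "ennreal (2*pi) * (ennreal ((cmod (f z))\<^sup>2) * emeasure lborel B) \<le> ennreal (2*pi) * (\<integral>\<^sup>+v. G v \<partial>lborel)" .
  then show ?thesis
    by (subst (asm) ennreal_mult_le_mult_iff) (auto simp: G_def[abs_def] B_def)
qed



definition mlow :: "real \<Rightarrow> real \<Rightarrow> nat \<Rightarrow> real" where
  "mlow \<sigma> r d = (exp 1 * \<sigma>\<^sup>2 / (2 * pi)) ^ d * exp (- (\<sigma>\<^sup>2 * (r + 1)\<^sup>2)) * exp (- 1)"

lemma mlow_pos: "\<sigma> > 0 \<Longrightarrow> mlow \<sigma> r d > 0"
  by (simp add: mlow_def)

lemma mlow_mono: "\<sigma> > 0 \<Longrightarrow> 0 \<le> r \<Longrightarrow> r \<le> R \<Longrightarrow> mlow \<sigma> R d \<le> mlow \<sigma> r d"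
  unfolding mlow_def
  by (intro mult_right_mono mult_left_mono) (auto intro!: power_mono mult_left_mono)

lemma weight_pos: "\<sigma> > 0 \<Longrightarrow> weight \<sigma> \<sigma>0 y > 0"
  by (simp add: weight_def)

lemma weight_lower:
  fixes y z :: "complex^'n"
  assumes "\<sigma> > 0" "dist z y < 1"
  shows "mlow \<sigma> (norm z) CARD('n) \<le> weight \<sigma> \<sigma>0 y"
proof -
  have ny: "norm y \<le> norm z + 1" using assms(2) norm_triangle_ineq2[of y z]
    by (simp add: dist_norm norm_minus_commute)
  have "(norm y)\<^sup>2 \<le> (norm z + 1)\<^sup>2" using ny by (intro power_mono) auto
  then have "\<sigma>\<^sup>2 * (norm y)\<^sup>2 \<le> \<sigma>\<^sup>2 * (norm z + 1)\<^sup>2" by (intro mult_left_mono) auto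
  then have e1: "exp (- (\<sigma>\<^sup>2 * (norm z + 1)\<^sup>2)) \<le> exp (- (\<sigma>\<^sup>2 * (norm y)\<^sup>2))" by simp
  have e2: "exp (- 1) \<le> exp (exp (- (\<sigma>0\<^sup>2 * (norm y)\<^sup>2)) - 1)"
    by simp
  show ?thesis unfolding mlow_def weight_def
    using assms(1) e1 e2 by (intro mult_mono) auto
qed

lemma ball_content: "emeasure lborel (ball (0::'a::euclidean_space) 1) = ennreal (measure lborel (ball (0::'a) 1))"
  using emeasure_lborel_ball_finite[of "0::'a" 1] by (intro emeasure_eq_ennreal_measure) (simp add: less_top)

lemma key_nn:
  fixes f :: "complex^'n \<Rightarrow> complex" and z :: "complex^'n"
  assumes f: "holomorphic_Cd f" and s: "\<sigma> > 0"
  shows "ennreal ((cmod (f z))\<^sup>2 * measure lborel (ball (0::complex^'n) 1) * mlow \<sigma> (norm z) CARD('n))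
     \<le> (\<integral>\<^sup>+y. ennreal ((cmod (f y))\<^sup>2 * weight \<sigma> \<sigma>0 y) \<partial>lborel)"
proof -
  define m where "m = mlow \<sigma> (norm z) CARD('n)"
  have m: "m > 0" using s by (simp add: m_def mlow_pos)
  have fc: "continuous_on UNIV f" by (rule holo_cont[OF f])
  have mg: "(\<lambda>y. indicator (ball z 1) y * ennreal ((cmod (f y))\<^sup>2)) \<in> borel_measurable borel"
  proof -
    have [measurable]: "(\<lambda>y. (cmod (f y))\<^sup>2) \<in> borel_measurable borel"
      by (intro borel_measurable_continuous_onI continuous_intros continuous_on_compose2[OF fc]) auto
    have [measurable]: "ball z 1 \<in> sets borel" by simp
    show ?thesis by measurable
  qed
  have "ennreal ((cmod (f z))\<^sup>2) * ennreal (measure lborel (ball (0::complex^'n) 1))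
      \<le> (\<integral>\<^sup>+v. indicator (ball 0 1) v * ennreal ((cmod (f (z + v)))\<^sup>2) \<partial>lborel)"
    using ball_mean[OF f, of z] by (simp add: ball_content)
  also have "\<dots> = (\<integral>\<^sup>+v. indicator (ball z 1) (z + v) * ennreal ((cmod (f (z + v)))\<^sup>2) \<partial>lborel)"
    by (intro nn_integral_cong) (simp add: indicator_def dist_norm)
  also have "\<dots> = (\<integral>\<^sup>+y. indicator (ball z 1) y * ennreal ((cmod (f y))\<^sup>2) \<partial>lborel)"
    by (rule nn_integral_translate[OF mg])
  also have "\<dots> \<le> (\<integral>\<^sup>+y. ennreal (1 / m) * ennreal ((cmod (f y))\<^sup>2 * weight \<sigma> \<sigma>0 y) \<partial>lborel)"
  proof (intro nn_integral_mono)
    fix y :: "complex^'n"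
    show "indicator (ball z 1) y * ennreal ((cmod (f y))\<^sup>2) \<le> ennreal (1 / m) * ennreal ((cmod (f y))\<^sup>2 * weight \<sigma> \<sigma>0 y)"
    proof (cases "y \<in> ball z 1")
      case True
      then have "m \<le> weight \<sigma> \<sigma>0 y" using weight_lower[OF s, of z y] by (simp add: m_def)
      then have "m * (cmod (f y))\<^sup>2 \<le> weight \<sigma> \<sigma>0 y * (cmod (f y))\<^sup>2"
        by (rule mult_right_mono) simp
      then have "(cmod (f y))\<^sup>2 \<le> 1 / m * ((cmod (f y))\<^sup>2 * weight \<sigma> \<sigma>0 y)"
        using m by (simp add: field_simps)
      then have "ennreal ((cmod (f y))\<^sup>2) \<le> ennreal (1 / m * ((cmod (f y))\<^sup>2 * weight \<sigma> \<sigma>0 y))"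
        by (rule ennreal_leI)
      also have "\<dots> = ennreal (1 / m) * ennreal ((cmod (f y))\<^sup>2 * weight \<sigma> \<sigma>0 y)"
        using m s by (intro ennreal_mult) (auto intro!: mult_nonneg_nonneg intro: less_imp_le weight_pos)
      finally show ?thesis using True by simp
    qed simp
  qed
  also have "\<dots> = ennreal (1 / m) * (\<integral>\<^sup>+y. ennreal ((cmod (f y))\<^sup>2 * weight \<sigma> \<sigma>0 y) \<partial>lborel)"
  proof (rule nn_integral_cmult)
    have "(\<lambda>y. (cmod (f y))\<^sup>2 * weight \<sigma> \<sigma>0 y) \<in> borel_measurable borel"
      unfolding weight_def
      by (intro borel_measurable_continuous_onI continuous_intros continuous_on_compose2[OF fc]) auto
    then show "(\<lambda>y. ennreal ((cmod (f y))\<^sup>2 * weight \<sigma> \<sigma>0 y)) \<in> borel_measurable lborel" by measurable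
  qed
  finally have le: "ennreal ((cmod (f z))\<^sup>2) * ennreal (measure lborel (ball (0::complex^'n) 1))
      \<le> ennreal (1 / m) * (\<integral>\<^sup>+y. ennreal ((cmod (f y))\<^sup>2 * weight \<sigma> \<sigma>0 y) \<partial>lborel)" .
  have "ennreal ((cmod (f z))\<^sup>2 * measure lborel (ball (0::complex^'n) 1) * m)
       = ennreal m * (ennreal ((cmod (f z))\<^sup>2) * ennreal (measure lborel (ball (0::complex^'n) 1)))"
    using m by (simp add: ennreal_mult[symmetric] mult_ac)
  also have "\<dots> \<le> ennreal m * (ennreal (1 / m) * (\<integral>\<^sup>+y. ennreal ((cmod (f y))\<^sup>2 * weight \<sigma> \<sigma>0 y) \<partial>lborel))"
    by (rule mult_left_mono[OF le]) simp
  also have "\<dots> = (\<integral>\<^sup>+y. ennreal ((cmod (f y))\<^sup>2 * weight \<sigma> \<sigma>0 y) \<partial>lborel)"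
    using m by (simp add: mult.assoc[symmetric] ennreal_mult[symmetric])
  finally show ?thesis by (simp add: m_def)
qed

lemma key_real:
  fixes f :: "complex^'n \<Rightarrow> complex" and z :: "complex^'n"
  assumes f: "holomorphic_Cd f" and s: "\<sigma> > 0"
    and int: "integrable lborel (\<lambda>y. (cmod (f y))\<^sup>2 * weight \<sigma> \<sigma>0 y)"
  shows "(cmod (f z))\<^sup>2 * (measure lborel (ball (0::complex^'n) 1) * mlow \<sigma> (norm z) CARD('n))
     \<le> (LINT y|lborel. (cmod (f y))\<^sup>2 * weight \<sigma> \<sigma>0 y)"
proof -
  have "(\<integral>\<^sup>+y. ennreal ((cmod (f y))\<^sup>2 * weight \<sigma> \<sigma>0 y) \<partial>lborel) = ennreal (LINT y|lborel. (cmod (f y))\<^sup>2 * weight \<sigma> \<sigma>0 y)"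
    using s by (intro nn_integral_eq_integral int) (auto intro!: AE_I2 mult_nonneg_nonneg intro: less_imp_le weight_pos)
  moreover have "0 \<le> (LINT y|lborel. (cmod (f y))\<^sup>2 * weight \<sigma> \<sigma>0 y)"
    using s by (intro integral_nonneg_AE AE_I2 mult_nonneg_nonneg) (auto intro: less_imp_le weight_pos)
  ultimately show ?thesis using key_nn[OF f s, of z \<sigma>0]
    by (simp add: mult.assoc)
qed



definition N2 :: "real \<Rightarrow> real \<Rightarrow> (complex^'n \<Rightarrow> complex) \<Rightarrow> real" where
  "N2 \<sigma> \<sigma>0 f = (LINT z|lborel. (cmod (f z))\<^sup>2 * weight \<sigma> \<sigma>0 z)"

lemma sq_sum_le: "(a + b)\<^sup>2 \<le> 2 * a\<^sup>2 + 2 * (b::real)\<^sup>2"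
proof -
  have "0 \<le> (a - b)\<^sup>2" by simp
  then show ?thesis by (simp add: power2_eq_square algebra_simps)
qed

lemma prod_le_sq: "(a::real) \<ge> 0 \<Longrightarrow> b \<ge> 0 \<Longrightarrow> a * b \<le> a\<^sup>2 + b\<^sup>2"
proof -
  assume "a \<ge> 0" "b \<ge> 0"
  have "0 \<le> (a - b)\<^sup>2" by simp
  moreover have "0 \<le> a * b" using \<open>a \<ge> 0\<close> \<open>b \<ge> 0\<close> by simp
  ultimately show ?thesis by (simp add: power2_eq_square algebra_simps)
qed

lemma weight_cont: "continuous_on UNIV (weight \<sigma> \<sigma>0 :: complex^'n \<Rightarrow> real)"
  unfolding weight_def[abs_def] by (intro continuous_intros)

lemma holo_zero: "holomorphic_Cd (\<lambda>x. 0)"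
  unfolding holomorphic_Cd_def by (auto intro!: exI[of _ "\<lambda>_. 0"])

lemma holo_add: "holomorphic_Cd f \<Longrightarrow> holomorphic_Cd g \<Longrightarrow> holomorphic_Cd (\<lambda>x. f x + g x)"
  unfolding holomorphic_Cd_def
proof (intro allI)
  fix z
  assume "\<forall>z. \<exists>L. (f has_derivative L) (at z) \<and> (\<forall>(c::complex) v. L (c *s v) = c * L v)"
     "\<forall>z. \<exists>L. (g has_derivative L) (at z) \<and> (\<forall>(c::complex) v. L (c *s v) = c * L v)"
  then obtain L1 L2 where d1: "(f has_derivative L1) (at z)" and l1: "\<forall>(c::complex) v. L1 (c *s v) = c * L1 v"
    and d2: "(g has_derivative L2) (at z)" and l2: "\<forall>(c::complex) v. L2 (c *s v) = c * L2 v" by blast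
  have "((\<lambda>x. f x + g x) has_derivative (\<lambda>h. L1 h + L2 h)) (at z)"
    by (rule has_derivative_add[OF d1 d2])
  moreover have "\<forall>(c::complex) v. L1 (c *s v) + L2 (c *s v) = c * (L1 v + L2 v)"
    using l1 l2 by (simp add: distrib_left)
  ultimately show "\<exists>L. ((\<lambda>x. f x + g x) has_derivative L) (at z) \<and> (\<forall>(c::complex) v. L (c *s v) = c * L v)"
    by blast
qed

lemma holo_cmult: "holomorphic_Cd f \<Longrightarrow> holomorphic_Cd (\<lambda>x. c * f x)"
  unfolding holomorphic_Cd_def
proof (intro allI)
  fix z
  assume "\<forall>z. \<exists>L. (f has_derivative L) (at z) \<and> (\<forall>(c::complex) v. L (c *s v) = c * L v)"
  then obtain L1 where d1: "(f has_derivative L1) (at z)" and l1: "\<forall>(c::complex) v. L1 (c *s v) = c * L1 v" by blast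
  have "((\<lambda>x. c * f x) has_derivative (\<lambda>h. c * L1 h)) (at z)"
    by (rule has_derivative_mult_right[OF d1])
  moreover have "\<forall>(c'::complex) v. c * L1 (c' *s v) = c' * (c * L1 v)"
    using l1 by (simp add: mult_ac)
  ultimately show "\<exists>L. ((\<lambda>x. c * f x) has_derivative L) (at z) \<and> (\<forall>(c'::complex) v. L (c' *s v) = c' * L v)"
    by blast
qed

lemma holo_diff: "holomorphic_Cd f \<Longrightarrow> holomorphic_Cd g \<Longrightarrow> holomorphic_Cd (\<lambda>x. f x - g x)"
  using holo_add[of f "\<lambda>x. (-1) * g x"] holo_cmult[of g "-1"] by simp

lemma sqw_meas[measurable]:
  "holomorphic_Cd f \<Longrightarrow> (\<lambda>z. (cmod (f z))\<^sup>2 * weight \<sigma> \<sigma>0 z) \<in> borel_measurable borel"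
  by (intro borel_measurable_continuous_onI continuous_intros continuous_on_compose2[OF holo_cont]
      continuous_on_compose2[OF weight_cont]) auto

lemma prodw_meas[measurable]:
  "holomorphic_Cd f \<Longrightarrow> holomorphic_Cd g \<Longrightarrow> (\<lambda>z. f z * cnj (g z) * complex_of_real (weight \<sigma> \<sigma>0 z)) \<in> borel_measurable borel"
  by (intro borel_measurable_continuous_onI continuous_intros continuous_on_compose2[OF holo_cont]
      continuous_on_compose2[OF weight_cont]) auto

lemma H_iff: "f \<in> H_space \<sigma> \<sigma>0 \<longleftrightarrow> holomorphic_Cd f \<and> integrable lborel (\<lambda>z. (cmod (f z))\<^sup>2 * weight \<sigma> \<sigma>0 z)"
  by (simp add: H_space_def)

lemma H_zero: "(\<lambda>x. 0) \<in> H_space \<sigma> \<sigma>0"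
  by (simp add: H_iff holo_zero)

lemma H_add:
  fixes f g :: "complex^'n \<Rightarrow> complex"
  assumes s: "\<sigma> > 0" and f: "f \<in> H_space \<sigma> \<sigma>0" and g: "g \<in> H_space \<sigma> \<sigma>0"
  shows "(\<lambda>x. f x + g x) \<in> H_space \<sigma> \<sigma>0"
proof -
  have hf: "holomorphic_Cd f" and hg: "holomorphic_Cd g" using f g by (auto simp: H_iff)
  have hfg: "holomorphic_Cd (\<lambda>x. f x + g x)" by (rule holo_add[OF hf hg])
  have i: "integrable lborel (\<lambda>z. 2 * ((cmod (f z))\<^sup>2 * weight \<sigma> \<sigma>0 z) + 2 * ((cmod (g z))\<^sup>2 * weight \<sigma> \<sigma>0 z))"
    using f g by (auto simp: H_iff)
  have "integrable lborel (\<lambda>z. (cmod (f z + g z))\<^sup>2 * weight \<sigma> \<sigma>0 z)"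
  proof (rule Bochner_Integration.integrable_bound[OF i])
    show "(\<lambda>z. (cmod (f z + g z))\<^sup>2 * weight \<sigma> \<sigma>0 z) \<in> borel_measurable lborel"
      using sqw_meas[OF hfg] by simp
    show "AE z in lborel. norm ((cmod (f z + g z))\<^sup>2 * weight \<sigma> \<sigma>0 z)
        \<le> norm (2 * ((cmod (f z))\<^sup>2 * weight \<sigma> \<sigma>0 z) + 2 * ((cmod (g z))\<^sup>2 * weight \<sigma> \<sigma>0 z))"
    proof (rule AE_I2)
      fix z :: "complex^'n"
      have w: "weight \<sigma> \<sigma>0 z > 0" using s by (rule weight_pos)
      have "(cmod (f z + g z))\<^sup>2 \<le> (cmod (f z) + cmod (g z))\<^sup>2"
        by (intro power_mono norm_triangle_ineq) auto
      also have "\<dots> \<le> 2 * (cmod (f z))\<^sup>2 + 2 * (cmod (g z))\<^sup>2"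
        by (rule sq_sum_le)
      finally have "(cmod (f z + g z))\<^sup>2 * weight \<sigma> \<sigma>0 z \<le> (2 * (cmod (f z))\<^sup>2 + 2 * (cmod (g z))\<^sup>2) * weight \<sigma> \<sigma>0 z"
        using w by (intro mult_right_mono) auto
      then show "norm ((cmod (f z + g z))\<^sup>2 * weight \<sigma> \<sigma>0 z)
        \<le> norm (2 * ((cmod (f z))\<^sup>2 * weight \<sigma> \<sigma>0 z) + 2 * ((cmod (g z))\<^sup>2 * weight \<sigma> \<sigma>0 z))"
        using w by (simp add: algebra_simps)
    qed
  qed
  with hfg show ?thesis by (simp add: H_iff)
qed

lemma H_cmult:
  fixes f g :: "complex^'n \<Rightarrow> complex"
  assumes f: "f \<in> H_space \<sigma> \<sigma>0"
  shows "(\<lambda>x. c * f x) \<in> H_space \<sigma> \<sigma>0"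
proof -
  have hf: "holomorphic_Cd f" using f by (auto simp: H_iff)
  have "integrable lborel (\<lambda>z. (cmod c)\<^sup>2 * ((cmod (f z))\<^sup>2 * weight \<sigma> \<sigma>0 z))"
    using f by (auto simp: H_iff)
  then have "integrable lborel (\<lambda>z. (cmod (c * f z))\<^sup>2 * weight \<sigma> \<sigma>0 z)"
    by (simp add: norm_mult power_mult_distrib mult.assoc)
  with holo_cmult[OF hf] show ?thesis by (simp add: H_iff)
qed

lemma H_diff:
  fixes f g :: "complex^'n \<Rightarrow> complex"
  assumes s: "\<sigma> > 0" and f: "f \<in> H_space \<sigma> \<sigma>0" and g: "g \<in> H_space \<sigma> \<sigma>0"
  shows "(\<lambda>x. f x - g x) \<in> H_space \<sigma> \<sigma>0"
  using H_add[OF s f H_cmult[OF g, of "-1"]] by simp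

lemma ip_integrable:
  fixes f g :: "complex^'n \<Rightarrow> complex"
  assumes s: "\<sigma> > 0" and f: "f \<in> H_space \<sigma> \<sigma>0" and g: "g \<in> H_space \<sigma> \<sigma>0"
  shows "integrable lborel (\<lambda>z. f z * cnj (g z) * complex_of_real (weight \<sigma> \<sigma>0 z))"
proof -
  have hf: "holomorphic_Cd f" and hg: "holomorphic_Cd g" using f g by (auto simp: H_iff)
  have i: "integrable lborel (\<lambda>z. ((cmod (f z))\<^sup>2 * weight \<sigma> \<sigma>0 z) + ((cmod (g z))\<^sup>2 * weight \<sigma> \<sigma>0 z))"
    using f g by (auto simp: H_iff)
  show ?thesis
  proof (rule Bochner_Integration.integrable_bound[OF i])
    show "(\<lambda>z. f z * cnj (g z) * complex_of_real (weight \<sigma> \<sigma>0 z)) \<in> borel_measurable lborel"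
      using prodw_meas[OF hf hg] by simp
    show "AE z in lborel. norm (f z * cnj (g z) * complex_of_real (weight \<sigma> \<sigma>0 z))
        \<le> norm (((cmod (f z))\<^sup>2 * weight \<sigma> \<sigma>0 z) + ((cmod (g z))\<^sup>2 * weight \<sigma> \<sigma>0 z))"
    proof (rule AE_I2)
      fix z :: "complex^'n"
      have w: "weight \<sigma> \<sigma>0 z > 0" using s by (rule weight_pos)
      have "cmod (f z) * cmod (g z) \<le> (cmod (f z))\<^sup>2 + (cmod (g z))\<^sup>2"
        by (rule prod_le_sq) auto
      then have "cmod (f z) * cmod (g z) * weight \<sigma> \<sigma>0 z \<le> ((cmod (f z))\<^sup>2 + (cmod (g z))\<^sup>2) * weight \<sigma> \<sigma>0 z"
        using w by (intro mult_right_mono) auto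
      then show "norm (f z * cnj (g z) * complex_of_real (weight \<sigma> \<sigma>0 z))
        \<le> norm (((cmod (f z))\<^sup>2 * weight \<sigma> \<sigma>0 z) + ((cmod (g z))\<^sup>2 * weight \<sigma> \<sigma>0 z))"
        using w by (simp add: norm_mult algebra_simps)
    qed
  qed
qed

lemma ip_self: "inner_H \<sigma> \<sigma>0 (f::complex^'n \<Rightarrow> complex) f = complex_of_real (N2 \<sigma> \<sigma>0 f)"
proof -
  have "inner_H \<sigma> \<sigma>0 f f = (CLINT z|lborel. complex_of_real ((cmod (f z))\<^sup>2 * weight \<sigma> \<sigma>0 z))"
    unfolding inner_H_def
    by (intro Bochner_Integration.integral_cong refl) (simp add: complex_mult_cnj cmod_def)
  also have "\<dots> = complex_of_real (N2 \<sigma> \<sigma>0 f)"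
    by (simp only: N2_def integral_complex_of_real)
  finally show ?thesis .
qed

lemma N2_nonneg: "\<sigma> > 0 \<Longrightarrow> N2 \<sigma> \<sigma>0 f \<ge> 0"
  unfolding N2_def by (intro integral_nonneg_AE AE_I2 mult_nonneg_nonneg) (auto intro: less_imp_le weight_pos)



lemma ip_add:
  fixes f g h :: "complex^'n \<Rightarrow> complex"
  assumes s: "\<sigma> > 0" and f: "f \<in> H_space \<sigma> \<sigma>0" and g: "g \<in> H_space \<sigma> \<sigma>0" and h: "h \<in> H_space \<sigma> \<sigma>0"
  shows "inner_H \<sigma> \<sigma>0 (\<lambda>x. f x + g x) h = inner_H \<sigma> \<sigma>0 f h + inner_H \<sigma> \<sigma>0 g h"
proof -
  have "inner_H \<sigma> \<sigma>0 (\<lambda>x. f x + g x) h = (CLINT z|lborel. f z * cnj (h z) * complex_of_real (weight \<sigma> \<sigma>0 z) + g z * cnj (h z) * complex_of_real (weight \<sigma> \<sigma>0 z))"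
    unfolding inner_H_def by (simp add: algebra_simps)
  also have "\<dots> = inner_H \<sigma> \<sigma>0 f h + inner_H \<sigma> \<sigma>0 g h"
    unfolding inner_H_def by (rule Bochner_Integration.integral_add[OF ip_integrable[OF s f h] ip_integrable[OF s g h]])
  finally show ?thesis .
qed

lemma ip_cmult:
  fixes f g :: "complex^'n \<Rightarrow> complex"
  shows "inner_H \<sigma> \<sigma>0 (\<lambda>x. c * f x) g = c * inner_H \<sigma> \<sigma>0 f g"
proof -
  have "inner_H \<sigma> \<sigma>0 (\<lambda>x. c * f x) g = (CLINT z|lborel. c * (f z * cnj (g z) * complex_of_real (weight \<sigma> \<sigma>0 z)))"
    unfolding inner_H_def by (intro Bochner_Integration.integral_cong refl) (simp only: mult.assoc)
  also have "\<dots> = c * inner_H \<sigma> \<sigma>0 f g"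
    unfolding inner_H_def by (rule integral_mult_right_zero)
  finally show ?thesis .
qed

lemma ip_sym:
  fixes f g :: "complex^'n \<Rightarrow> complex"
  shows "inner_H \<sigma> \<sigma>0 g f = cnj (inner_H \<sigma> \<sigma>0 f g)"
proof -
  have "cnj (inner_H \<sigma> \<sigma>0 f g) = (CLINT z|lborel. cnj (f z * cnj (g z) * complex_of_real (weight \<sigma> \<sigma>0 z)))"
    unfolding inner_H_def by (rule Bochner_Integration.integral_cnj[symmetric])
  also have "\<dots> = inner_H \<sigma> \<sigma>0 g f"
    unfolding inner_H_def
  proof (intro Bochner_Integration.integral_cong refl)
    fix z
    show "cnj (f z * cnj (g z) * complex_of_real (weight \<sigma> \<sigma>0 z)) = g z * cnj (f z) * complex_of_real (weight \<sigma> \<sigma>0 z)"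
      by (simp only: complex_cnj_mult complex_cnj_cnj complex_cnj_complex_of_real mult.commute[of "cnj (f z)" "g z"])
  qed
  finally show ?thesis by simp
qed

lemma V_pos: "measure lborel (ball (0::'a::euclidean_space) 1) > 0"
  using content_ball_pos[of 1 "0::'a"] by simp

lemma point_bound:
  fixes f :: "complex^'n \<Rightarrow> complex" and z :: "complex^'n"
  assumes s: "\<sigma> > 0" and f: "f \<in> H_space \<sigma> \<sigma>0" and R: "norm z \<le> R"
  shows "(cmod (f z))\<^sup>2 * (measure lborel (ball (0::complex^'n) 1) * mlow \<sigma> R CARD('n)) \<le> N2 \<sigma> \<sigma>0 f"
proof -
  have hf: "holomorphic_Cd f" and i: "integrable lborel (\<lambda>y. (cmod (f y))\<^sup>2 * weight \<sigma> \<sigma>0 y)"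
    using f by (auto simp: H_iff)
  have "mlow \<sigma> R CARD('n) \<le> mlow \<sigma> (norm z) CARD('n)"
    using s R by (intro mlow_mono) auto
  then have "(cmod (f z))\<^sup>2 * (measure lborel (ball (0::complex^'n) 1) * mlow \<sigma> R CARD('n))
      \<le> (cmod (f z))\<^sup>2 * (measure lborel (ball (0::complex^'n) 1) * mlow \<sigma> (norm z) CARD('n))"
    using V_pos by (intro mult_left_mono) auto
  also have "\<dots> \<le> N2 \<sigma> \<sigma>0 f"
    unfolding N2_def by (rule key_real[OF hf s i])
  finally show ?thesis .
qed

lemma point_bound':
  fixes f :: "complex^'n \<Rightarrow> complex" and z :: "complex^'n"
  assumes s: "\<sigma> > 0" and f: "f \<in> H_space \<sigma> \<sigma>0" and R: "norm z \<le> R"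
  shows "cmod (f z) \<le> sqrt (N2 \<sigma> \<sigma>0 f / (measure lborel (ball (0::complex^'n) 1) * mlow \<sigma> R CARD('n)))"
proof -
  have K: "measure lborel (ball (0::complex^'n) 1) * mlow \<sigma> R CARD('n) > 0"
    using V_pos s by (simp add: mlow_pos)
  have "(cmod (f z))\<^sup>2 \<le> N2 \<sigma> \<sigma>0 f / (measure lborel (ball (0::complex^'n) 1) * mlow \<sigma> R CARD('n))"
    using point_bound[OF s f R] K by (simp add: field_simps)
  then show ?thesis by (simp add: real_le_rsqrt)
qed

lemma ip_definite:
  fixes f :: "complex^'n \<Rightarrow> complex"
  assumes s: "\<sigma> > 0" and f: "f \<in> H_space \<sigma> \<sigma>0" and z: "inner_H \<sigma> \<sigma>0 f f = 0"
  shows "f = (\<lambda>x. 0)"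
proof
  fix x
  have N: "N2 \<sigma> \<sigma>0 f = 0" using z by (simp add: ip_self)
  have "cmod (f x) \<le> 0"
    using point_bound'[OF s f order_refl, of x] N by simp
  then show "f x = 0" by simp
qed



lemma holo_line_deriv:
  fixes g :: "complex^'n \<Rightarrow> complex"
  assumes hg: "holomorphic_Cd g" and L: "(g has_derivative L) (at x)"
  shows "((\<lambda>t. g (x + t *s v)) has_field_derivative (L v)) (at 0)"
proof -
  obtain L' where L': "(g has_derivative L') (at (x + 0 *s v))" "\<And>(c::complex) u. L' (c *s u) = c * L' u"
    using hg unfolding holomorphic_Cd_def by blast
  have "L' = L" using L'(1) L has_derivative_unique by (metis add.right_neutral vector_smult_lzero)
  have d: "((\<lambda>t. x + t *s v) has_derivative (\<lambda>h. h *s v)) (at 0)"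
    using smult_bounded_linear[of v]
    by (intro derivative_eq_intros) (auto simp: bounded_linear_imp_has_derivative)
  have "((\<lambda>t. g (x + t *s v)) has_derivative (\<lambda>h. L' (h *s v))) (at 0)"
    using has_derivative_compose[OF d L'(1)] by (simp add: o_def)
  then have "((\<lambda>t. g (x + t *s v)) has_derivative (\<lambda>h. h * L' v)) (at 0)"
    by (simp add: L'(2))
  moreover have "(\<lambda>h. h * L' v) = (*) (L v)" using \<open>L' = L\<close> by (auto simp: fun_eq_iff mult.commute)
  ultimately show ?thesis by (simp add: has_field_derivative_def)
qed

lemma deriv_bound:
  fixes g :: "complex^'n \<Rightarrow> complex"
  assumes hg: "holomorphic_Cd g" and L: "(g has_derivative L) (at x)"
    and B: "\<And>y. y \<in> cball x 1 \<Longrightarrow> cmod (g y) \<le> B"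
  shows "cmod (L h) \<le> B * norm h"
proof (cases "h = 0")
  case True
  have "linear L" using L has_derivative_linear by blast
  then show ?thesis using True by (simp add: linear_0)
next
  case False
  define v where "v = (1 / norm h) *\<^sub>R h"
  have nv: "norm v = 1" using False by (simp add: v_def)
  have lin: "linear L" using L has_derivative_linear by blast
  have hv: "h = norm h *\<^sub>R v" using False by (simp add: v_def)
  define \<phi> where "\<phi> t = g (x + t *s v)" for t
  have hphi: "\<phi> holomorphic_on UNIV" unfolding \<phi>_def by (rule holo_line[OF hg])
  have dphi: "(\<phi> has_field_derivative (L v)) (at 0)" unfolding \<phi>_def by (rule holo_line_deriv[OF hg L])
  have "norm ((deriv ^^ 1) \<phi> 0) \<le> fact 1 * B / 1 ^ 1"
  proof (rule Cauchy_inequality)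
    show "\<phi> holomorphic_on ball 0 1" using hphi by (rule holomorphic_on_subset) auto
    show "continuous_on (cball 0 1) \<phi>"
      using holomorphic_on_imp_continuous_on[OF hphi] by (rule continuous_on_subset) auto
    show "norm (\<phi> t) \<le> B" if "norm (0 - t) = 1" for t
    proof -
      have "x + t *s v \<in> cball x 1" using that nv by (simp add: dist_norm norm_smult_cvec)
      then show ?thesis unfolding \<phi>_def by (rule B)
    qed
  qed simp
  then have "cmod (L v) \<le> B" using DERIV_imp_deriv[OF dphi] by simp
  then have "norm h * cmod (L v) \<le> norm h * B" by (intro mult_left_mono) auto
  moreover have "L h = norm h *\<^sub>R L v" by (subst hv) (rule linear_scale[OF lin])
  ultimately show ?thesis by (simp add: mult.commute)
qed




lemma nrm_eq: "sqrt (Re (inner_H \<sigma> \<sigma>0 g g)) = sqrt (N2 \<sigma> \<sigma>0 (g :: complex^'n \<Rightarrow> complex))"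
  by (simp add: ip_self)

lemma diff_bound:
  fixes F G :: "complex^'n \<Rightarrow> complex" and x :: "complex^'n"
  assumes s: "\<sigma> > 0" and F: "F \<in> H_space \<sigma> \<sigma>0" and G: "G \<in> H_space \<sigma> \<sigma>0" and R: "norm x \<le> R"
  shows "cmod (F x - G x) * sqrt (measure lborel (ball (0::complex^'n) 1) * mlow \<sigma> R CARD('n))
     \<le> sqrt (N2 \<sigma> \<sigma>0 (\<lambda>y. F y - G y))"
proof -
  have K: "measure lborel (ball (0::complex^'n) 1) * mlow \<sigma> R CARD('n) > 0"
    using V_pos s by (simp add: mlow_pos)
  have "cmod (F x - G x) \<le> sqrt (N2 \<sigma> \<sigma>0 (\<lambda>y. F y - G y) / (measure lborel (ball (0::complex^'n) 1) * mlow \<sigma> R CARD('n)))"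
    using point_bound'[OF s H_diff[OF s F G] R] by simp
  then show ?thesis using K by (simp add: real_sqrt_divide field_simps)
qed

lemma completeness:
  fixes F :: "nat \<Rightarrow> complex^'n \<Rightarrow> complex"
  assumes s: "\<sigma> > 0" and FH: "\<And>n. F n \<in> H_space \<sigma> \<sigma>0"
    and C: "\<And>e. e > 0 \<Longrightarrow> \<exists>N. \<forall>m\<ge>N. \<forall>n\<ge>N. sqrt (N2 \<sigma> \<sigma>0 (\<lambda>x. F m x - F n x)) < e"
  shows "\<exists>f\<in>H_space \<sigma> \<sigma>0. (\<lambda>n. sqrt (N2 \<sigma> \<sigma>0 (\<lambda>x. F n x - f x))) \<longlonglongrightarrow> 0"
proof -
  define K where "K R = sqrt (measure lborel (ball (0::complex^'n) 1) * mlow \<sigma> R CARD('n))" for R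
  have Kpos: "K R > 0" for R using V_pos s by (simp add: K_def mlow_pos)
  have hF: "holomorphic_Cd (F n)" for n using FH by (auto simp: H_iff)
  have UC: "\<exists>N. \<forall>m\<ge>N. \<forall>n\<ge>N. \<forall>x. norm x \<le> R \<longrightarrow> cmod (F m x - F n x) \<le> e" if e: "e > 0" for R e
  proof -
    obtain N where N: "\<forall>m\<ge>N. \<forall>n\<ge>N. sqrt (N2 \<sigma> \<sigma>0 (\<lambda>x. F m x - F n x)) < e * K R"
      using C[of "e * K R"] e Kpos by auto
    show ?thesis
    proof (intro exI allI impI)
      fix m n x assume mn: "N \<le> m" "N \<le> n" and x: "norm (x::complex^'n) \<le> R"
      have a: "cmod (F m x - F n x) * K R \<le> sqrt (N2 \<sigma> \<sigma>0 (\<lambda>y. F m y - F n y))"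
        using diff_bound[OF s FH FH x, of m n] unfolding K_def .
      have b: "sqrt (N2 \<sigma> \<sigma>0 (\<lambda>y. F m y - F n y)) < e * K R" using N mn by blast
      have "cmod (F m x - F n x) * K R \<le> e * K R" using a b by linarith
      then show "cmod (F m x - F n x) \<le> e" using Kpos[of R] by simp
    qed
  qed
  have cauchy: "Cauchy (\<lambda>n. F n x)" for x
  proof (rule CauchyI)
    fix e :: real assume e: "e > 0"
    obtain N where N: "\<forall>m\<ge>N. \<forall>n\<ge>N. \<forall>y. norm y \<le> norm x \<longrightarrow> cmod (F m y - F n y) \<le> e / 2"
      using UC[of "e/2" "norm x"] e by auto
    show "\<exists>M. \<forall>m\<ge>M. \<forall>n\<ge>M. norm (F m x - F n x) < e"
      using N e by (intro exI[of _ N]) fastforce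
  qed
  define f where "f x = lim (\<lambda>n. F n x)" for x
  have Ff: "(\<lambda>n. F n x) \<longlonglongrightarrow> f x" for x
    using cauchy[of x] unfolding f_def by (simp add: Cauchy_convergent_iff convergent_LIMSEQ_iff)
  define D where "D n x = frechet_derivative (F n) (at x)" for n x
  have dD: "(F n has_derivative D n x) (at x)" for n x
  proof -
    obtain L where "(F n has_derivative L) (at x)" using hF[of n] unfolding holomorphic_Cd_def by blast
    then show ?thesis unfolding D_def using frechet_derivative_at by metis
  qed
  have linD: "D n x (c *s v) = c * D n x v" for n x c v
  proof -
    obtain L where L: "(F n has_derivative L) (at x)" "\<And>(c::complex) u. L (c *s u) = c * L u"
      using hF[of n] unfolding holomorphic_Cd_def by blast
    have "L = D n x" by (rule has_derivative_unique[OF L(1) dD])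
    then show ?thesis using L(2) by simp
  qed
  have UCD: "\<exists>N. \<forall>m\<ge>N. \<forall>n\<ge>N. \<forall>x. norm x \<le> R \<longrightarrow> (\<forall>h. cmod (D m x h - D n x h) \<le> e * norm h)"
    if e: "e > 0" for R e
  proof -
    obtain N where N: "\<forall>m\<ge>N. \<forall>n\<ge>N. \<forall>y. norm y \<le> R + 1 \<longrightarrow> cmod (F m y - F n y) \<le> e"
      using UC[OF e, of "R + 1"] by blast
    show ?thesis
    proof (intro exI allI impI)
      fix m n x h assume mn: "N \<le> m" "N \<le> n" and x: "norm (x::complex^'n) \<le> R"
      show "cmod (D m x h - D n x h) \<le> e * norm h"
      proof (rule deriv_bound)
        show "holomorphic_Cd (\<lambda>y. F m y - F n y)" by (rule holo_diff[OF hF hF])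
        show "((\<lambda>y. F m y - F n y) has_derivative (\<lambda>h. D m x h - D n x h)) (at x)"
          by (rule has_derivative_diff[OF dD dD])
        show "cmod (F m y - F n y) \<le> e" if "y \<in> cball x 1" for y
        proof -
          have "norm y \<le> R + 1" using that x norm_triangle_ineq2[of y x]
            by (simp add: dist_norm norm_minus_commute)
          then show ?thesis using N mn by blast
        qed
      qed
    qed
  qed
  have cauchyD: "Cauchy (\<lambda>n. D n x h)" for x h
  proof (rule CauchyI)
    fix e :: real assume e: "e > 0"
    define e' where "e' = e / (2 * (norm h + 1))"
    have pos1: "2 * (norm h + 1) > 0" by (simp add: add_nonneg_pos)
    then have pos: "e' > 0" unfolding e'_def using e by (rule divide_pos_pos[rotated])
    obtain N where N: "\<forall>m\<ge>N. \<forall>n\<ge>N. \<forall>y. norm y \<le> norm x \<longrightarrow> (\<forall>h. cmod (D m y h - D n y h) \<le> e' * norm h)"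
      using UCD[OF pos, of "norm x"] by (elim exE) (rule that)
    have a: "e' * norm h \<le> e' * (norm h + 1)"
      using pos by simp
    have b: "e' * (norm h + 1) = e / 2"
      unfolding e'_def using pos1 by (simp add: field_simps)
    have lt: "e' * norm h < e" using a b e by linarith
    show "\<exists>M. \<forall>m\<ge>M. \<forall>n\<ge>M. norm (D m x h - D n x h) < e"
    proof (intro exI[of _ N] allI impI)
      fix m n assume mn: "N \<le> m" "N \<le> n"
      have "cmod (D m x h - D n x h) \<le> e' * norm h" using N[rule_format, OF mn order_refl] .
      then show "norm (D m x h - D n x h) < e" using lt by simp
    qed
  qed
  define g' where "g' x h = lim (\<lambda>n. D n x h)" for x h
  have Dg: "(\<lambda>n. D n x h) \<longlonglongrightarrow> g' x h" for x h
    using cauchyD[of x h] unfolding g'_def by (simp add: Cauchy_convergent_iff convergent_LIMSEQ_iff)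
  have UD: "\<exists>N. \<forall>m\<ge>N. \<forall>x. norm x \<le> R \<longrightarrow> (\<forall>h. cmod (D m x h - g' x h) \<le> e * norm h)"
    if e: "e > 0" for R e
  proof -
    obtain N where N: "\<forall>m\<ge>N. \<forall>n\<ge>N. \<forall>x. norm x \<le> R \<longrightarrow> (\<forall>h. cmod (D m x h - D n x h) \<le> e * norm h)"
      using UCD[OF e] by blast
    show ?thesis
    proof (intro exI allI impI)
      fix m x h assume m: "N \<le> m" and x: "norm (x::complex^'n) \<le> R"
      have "(\<lambda>n. cmod (D m x h - D n x h)) \<longlonglongrightarrow> cmod (D m x h - g' x h)"
        by (intro tendsto_intros Dg)
      then show "cmod (D m x h - g' x h) \<le> e * norm h"
        by (rule LIMSEQ_le_const2) (use N m x in blast)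
    qed
  qed
  have hf: "holomorphic_Cd f"
    unfolding holomorphic_Cd_def
  proof
    fix z :: "complex^'n"
    define R where "R = norm z + 1"
    define S where "S = ball (0::complex^'n) R"
    have zS: "z \<in> S" by (simp add: S_def R_def)
    have "\<exists>g. \<forall>x\<in>S. (\<lambda>n. F n x) \<longlonglongrightarrow> g x \<and> (g has_derivative g' x) (at x within S)"
    proof (rule has_derivative_sequence)
      show "convex S" by (simp add: S_def)
      show "(F n has_derivative D n x) (at x within S)" if "x \<in> S" for n x
        using dD by (rule has_derivative_at_withinI)
      show "\<forall>\<^sub>F n in sequentially. \<forall>x\<in>S. \<forall>h. norm (D n x h - g' x h) \<le> e * norm h" if "e > 0" for e
      proof -
        obtain N where N: "\<forall>m\<ge>N. \<forall>x. norm x \<le> R \<longrightarrow> (\<forall>h. cmod (D m x h - g' x h) \<le> e * norm h)"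
          using UD[OF \<open>e > 0\<close>] by blast
        show ?thesis unfolding eventually_sequentially
          using N by (intro exI[of _ N]) (auto simp: S_def)
      qed
      show "0 \<in> S" by (simp add: S_def R_def add_nonneg_pos)
      show "(\<lambda>n. F n 0) \<longlonglongrightarrow> f 0" by (rule Ff)
    qed
    then obtain g where g: "\<And>x. x \<in> S \<Longrightarrow> (\<lambda>n. F n x) \<longlonglongrightarrow> g x \<and> (g has_derivative g' x) (at x within S)"
      by blast
    have gf: "g x = f x" if "x \<in> S" for x using g[OF that] Ff[of x] LIMSEQ_unique by blast
    have "(g has_derivative g' z) (at z)"
      using g[OF zS] at_within_open[OF zS] by (simp add: S_def)
    then have "(f has_derivative g' z) (at z)"
      by (rule has_derivative_transform_within_open[of g _ z "UNIV" S]) (use zS gf in \<open>auto simp: S_def\<close>)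
    moreover have "g' z (c *s v) = c * g' z v" for c v
    proof -
      have "(\<lambda>n. D n z (c *s v)) \<longlonglongrightarrow> c * g' z v"
        unfolding linD by (intro tendsto_intros Dg)
      then show ?thesis using Dg LIMSEQ_unique by blast
    qed
    ultimately show "\<exists>L. (f has_derivative L) (at z) \<and> (\<forall>(c::complex) v. L (c *s v) = c * L v)"
      by blast
  qed
  have FAT: "(\<lambda>x. F n x - f x) \<in> H_space \<sigma> \<sigma>0 \<and> N2 \<sigma> \<sigma>0 (\<lambda>x. F n x - f x) \<le> e\<^sup>2"
    if N: "\<forall>m\<ge>N. \<forall>n\<ge>N. sqrt (N2 \<sigma> \<sigma>0 (\<lambda>x. F m x - F n x)) < e" and n: "n \<ge> N" and e: "e > 0" for N n e
  proof -
    have hd: "holomorphic_Cd (\<lambda>x. F n x - f x)" by (rule holo_diff[OF hF hf])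
    define u where "u m x = ennreal ((cmod (F n x - F m x))\<^sup>2 * weight \<sigma> \<sigma>0 x)" for m x
    have um: "u m \<in> borel_measurable lborel" for m
    proof -
      have "(\<lambda>x. (cmod (F n x - F m x))\<^sup>2 * weight \<sigma> \<sigma>0 x) \<in> borel_measurable borel"
        by (rule sqw_meas[OF holo_diff[OF hF hF]])
      then show ?thesis unfolding u_def by measurable
    qed
    have ulim: "(\<lambda>m. u m x) \<longlonglongrightarrow> ennreal ((cmod (F n x - f x))\<^sup>2 * weight \<sigma> \<sigma>0 x)" for x
      unfolding u_def by (intro tendsto_ennrealI tendsto_intros Ff)
    have uint: "integral\<^sup>N lborel (u m) = ennreal (N2 \<sigma> \<sigma>0 (\<lambda>x. F n x - F m x))" for m
    proof -
      have "integrable lborel (\<lambda>x. (cmod (F n x - F m x))\<^sup>2 * weight \<sigma> \<sigma>0 x)"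
        using H_diff[OF s FH FH, of n m] by (simp add: H_iff)
      then show ?thesis unfolding u_def N2_def
        using s by (intro nn_integral_eq_integral) (auto intro!: AE_I2 mult_nonneg_nonneg intro: less_imp_le weight_pos)
    qed
    have "(\<integral>\<^sup>+x. ennreal ((cmod (F n x - f x))\<^sup>2 * weight \<sigma> \<sigma>0 x) \<partial>lborel) = (\<integral>\<^sup>+x. liminf (\<lambda>m. u m x) \<partial>lborel)"
      by (intro nn_integral_cong) (simp add: lim_imp_Liminf[OF trivial_limit_sequentially ulim])
    also have "\<dots> \<le> liminf (\<lambda>m. integral\<^sup>N lborel (u m))"
      by (rule nn_integral_liminf) (rule um)
    also have "\<dots> \<le> limsup (\<lambda>m. integral\<^sup>N lborel (u m))"
      by (rule Liminf_le_Limsup) simp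
    also have "\<dots> \<le> ennreal (e\<^sup>2)"
    proof (rule Limsup_bounded)
      show "\<forall>\<^sub>F m in sequentially. integral\<^sup>N lborel (u m) \<le> ennreal (e\<^sup>2)"
        unfolding eventually_sequentially
      proof (intro exI allI impI)
        fix m assume m: "N \<le> m"
        have "sqrt (N2 \<sigma> \<sigma>0 (\<lambda>x. F n x - F m x)) < e" using N n m by blast
        then have "N2 \<sigma> \<sigma>0 (\<lambda>x. F n x - F m x) \<le> e\<^sup>2"
        proof -
          have nn: "0 \<le> N2 \<sigma> \<sigma>0 (\<lambda>x. F n x - F m x)" by (rule N2_nonneg[OF s])
          have "(sqrt (N2 \<sigma> \<sigma>0 (\<lambda>x. F n x - F m x)))\<^sup>2 \<le> e\<^sup>2"
            by (rule power_mono) (use \<open>sqrt (N2 \<sigma> \<sigma>0 (\<lambda>x. F n x - F m x)) < e\<close> nn in auto)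
          then show ?thesis using nn by simp
        qed
        then show "integral\<^sup>N lborel (u m) \<le> ennreal (e\<^sup>2)" by (simp add: uint ennreal_leI)
      qed
    qed
    finally have I: "(\<integral>\<^sup>+x. ennreal ((cmod (F n x - f x))\<^sup>2 * weight \<sigma> \<sigma>0 x) \<partial>lborel) \<le> ennreal (e\<^sup>2)" .
    have nn: "0 \<le> (cmod (F n x - f x))\<^sup>2 * weight \<sigma> \<sigma>0 x" for x
      using s by (auto intro!: mult_nonneg_nonneg intro: less_imp_le weight_pos)
    have int: "integrable lborel (\<lambda>x. (cmod (F n x - f x))\<^sup>2 * weight \<sigma> \<sigma>0 x)"
    proof (rule integrableI_bounded)
      show "(\<lambda>x. (cmod (F n x - f x))\<^sup>2 * weight \<sigma> \<sigma>0 x) \<in> borel_measurable lborel"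
        using sqw_meas[OF hd] by simp
      have "(\<integral>\<^sup>+x. ennreal (norm ((cmod (F n x - f x))\<^sup>2 * weight \<sigma> \<sigma>0 x)) \<partial>lborel)
          = (\<integral>\<^sup>+x. ennreal ((cmod (F n x - f x))\<^sup>2 * weight \<sigma> \<sigma>0 x) \<partial>lborel)"
        using nn by (intro nn_integral_cong) simp
      also have "\<dots> < \<infinity>" using I by (simp add: le_less_trans)
      finally show "(\<integral>\<^sup>+x. ennreal (norm ((cmod (F n x - f x))\<^sup>2 * weight \<sigma> \<sigma>0 x)) \<partial>lborel) < \<infinity>" .
    qed
    have "ennreal (N2 \<sigma> \<sigma>0 (\<lambda>x. F n x - f x)) = (\<integral>\<^sup>+x. ennreal ((cmod (F n x - f x))\<^sup>2 * weight \<sigma> \<sigma>0 x) \<partial>lborel)"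
      unfolding N2_def using nn by (intro nn_integral_eq_integral[symmetric] int) auto
    with I have "ennreal (N2 \<sigma> \<sigma>0 (\<lambda>x. F n x - f x)) \<le> ennreal (e\<^sup>2)" by simp
    then have "N2 \<sigma> \<sigma>0 (\<lambda>x. F n x - f x) \<le> e\<^sup>2" by (simp add: ennreal_le_iff)
    moreover have "(\<lambda>x. F n x - f x) \<in> H_space \<sigma> \<sigma>0" using hd int by (simp add: H_iff)
    ultimately show ?thesis by simp
  qed
  obtain N1 where N1: "\<forall>m\<ge>N1. \<forall>n\<ge>N1. sqrt (N2 \<sigma> \<sigma>0 (\<lambda>x. F m x - F n x)) < 1"
    using C[of 1] by auto
  have fH: "f \<in> H_space \<sigma> \<sigma>0"
  proof -
    have "(\<lambda>x. F N1 x - f x) \<in> H_space \<sigma> \<sigma>0" using FAT[OF N1 order_refl] by simp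
    from H_diff[OF s FH[of N1] this] show ?thesis by simp
  qed
  have "(\<lambda>n. sqrt (N2 \<sigma> \<sigma>0 (\<lambda>x. F n x - f x))) \<longlonglongrightarrow> 0"
  proof (rule LIMSEQ_I)
    fix r :: real assume r: "r > 0"
    obtain N where N: "\<forall>m\<ge>N. \<forall>n\<ge>N. sqrt (N2 \<sigma> \<sigma>0 (\<lambda>x. F m x - F n x)) < r / 2"
      using C[of "r/2"] r by auto
    show "\<exists>no. \<forall>n\<ge>no. norm (sqrt (N2 \<sigma> \<sigma>0 (\<lambda>x. F n x - f x)) - 0) < r"
    proof (intro exI allI impI)
      fix n assume n: "N \<le> n"
      have "N2 \<sigma> \<sigma>0 (\<lambda>x. F n x - f x) \<le> (r/2)\<^sup>2" using FAT[OF N n] r by simp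
      then have "sqrt (N2 \<sigma> \<sigma>0 (\<lambda>x. F n x - f x)) \<le> sqrt ((r/2)\<^sup>2)"
        by (rule real_sqrt_le_mono)
      then have "sqrt (N2 \<sigma> \<sigma>0 (\<lambda>x. F n x - f x)) \<le> r / 2"
        using r by simp
      then show "norm (sqrt (N2 \<sigma> \<sigma>0 (\<lambda>x. F n x - f x)) - 0) < r"
        using r N2_nonneg[OF s, of \<sigma>0 "\<lambda>x. F n x - f x"] by simp
    qed
  qed
  with fH show ?thesis by blast
qed



lemma eval_cont:
  fixes F :: "nat \<Rightarrow> complex^'n \<Rightarrow> complex" and f :: "complex^'n \<Rightarrow> complex"
  assumes s: "\<sigma> > 0" and FH: "\<And>n. F n \<in> H_space \<sigma> \<sigma>0" and fH: "f \<in> H_space \<sigma> \<sigma>0"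
    and lim: "(\<lambda>n. sqrt (N2 \<sigma> \<sigma>0 (\<lambda>y. F n y - f y))) \<longlonglongrightarrow> 0"
  shows "(\<lambda>n. F n x) \<longlonglongrightarrow> f x"
proof -
  define K where "K = sqrt (measure lborel (ball (0::complex^'n) 1) * mlow \<sigma> (norm x) CARD('n))"
  have K: "K > 0" using V_pos s by (simp add: K_def mlow_pos)
  have "((\<lambda>n. F n x - f x) \<longlongrightarrow> 0) sequentially"
  proof (rule Lim_null_comparison)
    show "\<forall>\<^sub>F n in sequentially. norm (F n x - f x) \<le> sqrt (N2 \<sigma> \<sigma>0 (\<lambda>y. F n y - f y)) / K"
    proof (rule always_eventually, rule allI)
      fix n
      have "cmod (F n x - f x) * K \<le> sqrt (N2 \<sigma> \<sigma>0 (\<lambda>y. F n y - f y))"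
        using diff_bound[OF s FH fH order_refl, of n x] unfolding K_def .
      then show "norm (F n x - f x) \<le> sqrt (N2 \<sigma> \<sigma>0 (\<lambda>y. F n y - f y)) / K"
        using K by (simp add: field_simps)
    qed
    show "(\<lambda>n. sqrt (N2 \<sigma> \<sigma>0 (\<lambda>y. F n y - f y)) / K) \<longlonglongrightarrow> 0"
      using tendsto_divide[OF lim tendsto_const[of K]] K by simp
  qed
  then show ?thesis by (simp add: LIM_zero_iff)
qed

theorem corollary3p2:
  fixes \<sigma> \<sigma>0 :: real
  assumes "\<sigma> > 0" and "\<sigma>0 \<ge> 0"
  shows "is_RKHS (H_space \<sigma> \<sigma>0 :: (complex ^ 'n \<Rightarrow> complex) set) (inner_H \<sigma> \<sigma>0)"
proof -
  have s: "\<sigma> > 0" by fact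
  let ?H = "H_space \<sigma> \<sigma>0 :: (complex ^ 'n \<Rightarrow> complex) set"
  let ?ip = "inner_H \<sigma> \<sigma>0 :: (complex ^ 'n \<Rightarrow> complex) \<Rightarrow> _"
  have nrm: "sqrt (Re (?ip g g)) = sqrt (N2 \<sigma> \<sigma>0 g)" for g by (rule nrm_eq)
  have c1: "(\<lambda>x. 0) \<in> ?H" by (rule H_zero)
  have c2: "\<forall>f\<in>?H. \<forall>g\<in>?H. (\<lambda>x. f x + g x) \<in> ?H" using H_add[OF s] by blast
  have c3: "\<forall>c. \<forall>f\<in>?H. (\<lambda>x. c * f x) \<in> ?H" using H_cmult by blast
  have c4: "\<forall>f\<in>?H. \<forall>g\<in>?H. \<forall>h\<in>?H. ?ip (\<lambda>x. f x + g x) h = ?ip f h + ?ip g h"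
    using ip_add[OF s] by blast
  have c5: "\<forall>c. \<forall>f\<in>?H. \<forall>g\<in>?H. ?ip (\<lambda>x. c * f x) g = c * ?ip f g"
    using ip_cmult by blast
  have c6: "\<forall>f\<in>?H. \<forall>g\<in>?H. ?ip g f = cnj (?ip f g)"
    using ip_sym by blast
  have c7: "\<forall>f\<in>?H. Im (?ip f f) = 0 \<and> Re (?ip f f) \<ge> 0"
    using N2_nonneg[OF s] by (simp add: ip_self) blast
  have c8: "\<forall>f\<in>?H. ?ip f f = 0 \<longrightarrow> f = (\<lambda>x. 0)"
    using ip_definite[OF s] by blast
  have c9: "\<forall>F. (\<forall>n. F n \<in> ?H) \<and>
            (\<forall>e>0. \<exists>N. \<forall>m\<ge>N. \<forall>n\<ge>N. sqrt (Re (?ip (\<lambda>x. F m x - F n x) (\<lambda>x. F m x - F n x))) < e)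
            \<longrightarrow> (\<exists>f\<in>?H. (\<lambda>n. sqrt (Re (?ip (\<lambda>x. F n x - f x) (\<lambda>x. F n x - f x)))) \<longlonglongrightarrow> 0)"
  proof (intro allI impI, elim conjE)
    fix F :: "nat \<Rightarrow> complex^'n \<Rightarrow> complex"
    assume FH: "\<forall>n. F n \<in> ?H"
      and C: "\<forall>e>0. \<exists>N. \<forall>m\<ge>N. \<forall>n\<ge>N. sqrt (Re (?ip (\<lambda>x. F m x - F n x) (\<lambda>x. F m x - F n x))) < e"
    have "\<exists>f\<in>?H. (\<lambda>n. sqrt (N2 \<sigma> \<sigma>0 (\<lambda>x. F n x - f x))) \<longlonglongrightarrow> 0"
      by (rule completeness[OF s]) (use FH C in \<open>auto simp: nrm\<close>)
    then show "\<exists>f\<in>?H. (\<lambda>n. sqrt (Re (?ip (\<lambda>x. F n x - f x) (\<lambda>x. F n x - f x)))) \<longlonglongrightarrow> 0"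
      by (simp add: nrm)
  qed
  have c10: "\<forall>x. \<forall>F f. (\<forall>n. F n \<in> ?H) \<and> f \<in> ?H \<and> (\<lambda>n. sqrt (Re (?ip (\<lambda>y. F n y - f y) (\<lambda>y. F n y - f y)))) \<longlonglongrightarrow> 0
            \<longrightarrow> (\<lambda>n. F n x) \<longlonglongrightarrow> f x"
  proof (intro allI impI, elim conjE)
    fix x :: "complex^'n" and F :: "nat \<Rightarrow> complex^'n \<Rightarrow> complex" and f
    assume FH: "\<forall>n. F n \<in> ?H" and fH: "f \<in> ?H"
      and lim: "(\<lambda>n. sqrt (Re (?ip (\<lambda>y. F n y - f y) (\<lambda>y. F n y - f y)))) \<longlonglongrightarrow> 0"
    show "(\<lambda>n. F n x) \<longlonglongrightarrow> f x"
      by (rule eval_cont[OF s _ fH]) (use FH lim in \<open>auto simp: nrm\<close>)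
  qed
  show ?thesis
    unfolding is_RKHS_def Let_def
    using c1 c2 c3 c4 c5 c6 c7 c8 c9 c10 by blast
qed


end
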